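(* Let $n\ge 4$ and let $\mathcal M$ be an IP-SEG representation of the chordless cycle $C_n$ containing at least one interval segment. Then either $\mathcal M$ has exactly one interval arc, or $\mathcal M$ has exactly two interval arcs and these lie on different lines (one on $L_1$ and one on $L_2$).
   Context: Let $L_1$ and $L_2$ be two distinct parallel horizontal lines in the plane. A closed straight line segment is an interval segment if both of its endpoints lie on the same line $L_i$, and a permutation segment if one endpoint lies on $L_1$ and the other on $L_2$. An IP-SEG model is a finite family of interval and permutation segments; its intersection graph has one vertex per segment, adjacent iff the segments intersect. For $m\ge 3$, $C_m$ is the chordless cycle on $v_1,\dots,v_m$ with $v_i$ adjacent to $v_{i+1}$ (indices mod $m$) and no other edges. An IP-SEG representation of $C_m$ is an IP-SEG model with segments $s(v_1),\dots,s(v_m)$ whose intersection graph is $C_m$ with $s(v_i)$ corresponding to $v_i$. If such a representation contains both interval and permutation segments, an interval arc is a maximal sequence of cyclically consecutive segments $s(v_i),\dots,s(v_j)$ that are all interval segments (all segments of an interval arc lie on the same line). *)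

theory Defs
  imports "HOL-Analysis.Analysis"
begin

type_synonym point = "real \<times> real"
type_synonym seg = "point \<times> point"

text \<open>The lines are L1 = {y = a} and L2 = {y = b} with a \<noteq> b.\<close>

definition on_line :: "real \<Rightarrow> point \<Rightarrow> bool" where
  "on_line c p \<longleftrightarrow> snd p = c"

definition seg_set :: "seg \<Rightarrow> point set" where
  "seg_set s = closed_segment (fst s) (snd s)"

definition interval_seg_on :: "real \<Rightarrow> seg \<Rightarrow> bool" where
  "interval_seg_on c s \<longleftrightarrow> on_line c (fst s) \<and> on_line c (snd s)"

definition interval_seg :: "real \<Rightarrow> real \<Rightarrow> seg \<Rightarrow> bool" where
  "interval_seg a b s \<longleftrightarrow> interval_seg_on a s \<or> interval_seg_on b s"

definition perm_seg :: "real \<Rightarrow> real \<Rightarrow> seg \<Rightarrow> bool" where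
  "perm_seg a b s \<longleftrightarrow> (on_line a (fst s) \<and> on_line b (snd s)) \<or> (on_line b (fst s) \<and> on_line a (snd s))"

text \<open>An IP-SEG representation of C_n: segments s 0, ..., s (n-1) (vertex v_(i+1) is s i),
  each an interval or permutation segment, whose intersection graph is exactly the cycle.\<close>
definition IPSEG_rep_cycle :: "real \<Rightarrow> real \<Rightarrow> nat \<Rightarrow> (nat \<Rightarrow> seg) \<Rightarrow> bool" where
  "IPSEG_rep_cycle a b n s \<longleftrightarrow>
     (\<forall>i<n. interval_seg a b (s i) \<or> perm_seg a b (s i)) \<and>
     (\<forall>i<n. \<forall>j<n. i \<noteq> j \<longrightarrow>
        (seg_set (s i) \<inter> seg_set (s j) \<noteq> {} \<longleftrightarrow> (j = Suc i mod n \<or> i = Suc j mod n)))"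

definition cyc_block :: "nat \<Rightarrow> nat \<Rightarrow> nat \<Rightarrow> nat set" where
  "cyc_block n i k = {(i + t) mod n | t. t \<le> k}"

definition interval_run :: "real \<Rightarrow> real \<Rightarrow> nat \<Rightarrow> (nat \<Rightarrow> seg) \<Rightarrow> nat set \<Rightarrow> bool" where
  "interval_run a b n s A \<longleftrightarrow>
     (\<exists>i k. i < n \<and> k < n \<and> A = cyc_block n i k) \<and> (\<forall>j\<in>A. interval_seg a b (s j))"

definition interval_arc :: "real \<Rightarrow> real \<Rightarrow> nat \<Rightarrow> (nat \<Rightarrow> seg) \<Rightarrow> nat set \<Rightarrow> bool" where
  "interval_arc a b n s A \<longleftrightarrow>
     interval_run a b n s A \<and> (\<forall>B. interval_run a b n s B \<and> A \<subseteq> B \<longrightarrow> B = A)"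

end

theory Submission
  imports Defs
begin


definition xs :: "seg \<Rightarrow> real set" where
  "xs s = closed_segment (fst (fst s)) (fst (snd s))"

definition pu :: "real \<Rightarrow> seg \<Rightarrow> real" where
  "pu a s = (if snd (fst s) = a then fst (fst s) else fst (snd s))"

lemma seg_mem: "(z \<in> seg_set s) \<longleftrightarrow>
   (\<exists>t. 0 \<le> t \<and> t \<le> 1 \<and> fst z = (1-t) * fst (fst s) + t * fst (snd s) \<and> snd z = (1-t) *  snd (fst s) + t *  snd (snd s))"
  unfolding seg_set_def closed_segment_def
  by (cases z; cases "fst s"; cases "snd s") auto

lemma int_mem:
  assumes "interval_seg_on c s"
  shows "(z \<in> seg_set s) \<longleftrightarrow> snd z = c \<and> fst z \<in> xs s"
  using assms unfolding seg_mem xs_def closed_segment_def interval_seg_on_def on_line_def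
  by (auto simp: algebra_simps)

lemma xs_ne: "xs s \<noteq> {}"
  unfolding xs_def by auto

lemma perm_mem:
  assumes "a \<noteq> b" "perm_seg a b s"
  shows "(z \<in> seg_set s) \<longleftrightarrow>
    (\<exists>t. 0 \<le> t \<and> t \<le> 1 \<and> fst z = (1-t) * pu a s + t * pu b s \<and> snd z = (1-t) * a + t * b)"
  using assms(2) unfolding perm_seg_def on_line_def
proof
  assume h: "snd (fst s) = a \<and> snd (snd s) = b"
  then show ?thesis using assms(1) unfolding seg_mem pu_def by auto
next
  assume h: "snd (fst s) = b \<and> snd (snd s) = a"
  have e: "seg_set s = seg_set (snd s, fst s)"
    unfolding seg_set_def by (simp add: closed_segment_commute)
  have pa: "pu a s = fst (snd s)" "pu b s = fst (fst s)" using h assms(1) unfolding pu_def by auto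
  show ?thesis unfolding e seg_mem pa using h by simp
qed

lemma ints_disj:
  assumes "interval_seg_on a s1" "interval_seg_on b s2" "a \<noteq> b"
  shows "seg_set s1 \<inter> seg_set s2 = {}"
  using int_mem[OF assms(1)] int_mem[OF assms(2)] assms(3) by auto

lemma ints_meet:
  assumes "interval_seg_on c s1" "interval_seg_on c s2"
  shows "seg_set s1 \<inter> seg_set s2 \<noteq> {} \<longleftrightarrow> xs s1 \<inter> xs s2 \<noteq> {}"
proof
  assume "seg_set s1 \<inter> seg_set s2 \<noteq> {}"
  then obtain z where "z \<in> seg_set s1" "z \<in> seg_set s2" by auto
  then show "xs s1 \<inter> xs s2 \<noteq> {}" using int_mem[OF assms(1)] int_mem[OF assms(2)] by auto
next
  assume "xs s1 \<inter> xs s2 \<noteq> {}"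
  then obtain x where "x \<in> xs s1" "x \<in> xs s2" by auto
  then have "(x,c) \<in> seg_set s1" "(x,c) \<in> seg_set s2"
    using int_mem[OF assms(1)] int_mem[OF assms(2)] by auto
  then show "seg_set s1 \<inter> seg_set s2 \<noteq> {}" by auto
qed

lemma perm_int_a:
  assumes "a \<noteq> b" "perm_seg a b p" "interval_seg_on a s"
  shows "seg_set p \<inter> seg_set s \<noteq> {} \<longleftrightarrow> pu a p \<in> xs s"
proof
  assume "seg_set p \<inter> seg_set s \<noteq> {}"
  then obtain z where z: "z \<in> seg_set p" "z \<in> seg_set s" by auto
  from z(2) int_mem[OF assms(3)] have "snd z = a" "fst z \<in> xs s" by auto
  from z(1) perm_mem[OF assms(1,2)] obtain t where t: "0 \<le> t" "t \<le> 1"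
    "fst z = (1-t) * pu a p + t * pu b p" "snd z = (1-t) * a + t * b" by auto
  have "t * (b - a) = 0" using t(4) \<open>snd z = a\<close> by (auto simp: algebra_simps)
  then have "t = 0" using assms(1) by auto
  then show "pu a p \<in> xs s" using t(3) \<open>fst z \<in> xs s\<close> by simp
next
  assume "pu a p \<in> xs s"
  then have "(pu a p, a) \<in> seg_set p" "(pu a p, a) \<in> seg_set s"
    using perm_mem[OF assms(1,2)] int_mem[OF assms(3)] by (auto intro!: exI[of _ 0])
  then show "seg_set p \<inter> seg_set s \<noteq> {}" by auto
qed

lemma perm_sym: "perm_seg a b s = perm_seg b a s"
  unfolding perm_seg_def by auto

lemma perm_mem_sym:
  assumes "a \<noteq> b" "perm_seg a b s"
  shows "(z \<in> seg_set s) \<longleftrightarrow>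
    (\<exists>t. 0 \<le> t \<and> t \<le> 1 \<and> fst z = (1-t) * pu b s + t * pu a s \<and> snd z = (1-t) * b + t * a)"
  using perm_mem[of b a s z] assms perm_sym by metis

lemma perm_int_b:
  assumes "a \<noteq> b" "perm_seg a b p" "interval_seg_on b s"
  shows "seg_set p \<inter> seg_set s \<noteq> {} \<longleftrightarrow> pu b p \<in> xs s"
  using perm_int_a[of b a p s] assms perm_sym by metis

lemma perm_perm:
  assumes "a \<noteq> b" "perm_seg a b p" "perm_seg a b q"
  shows "seg_set p \<inter> seg_set q = {} \<longleftrightarrow>
    ((pu a p < pu a q \<and> pu b p < pu b q) \<or> (pu a p > pu a q \<and> pu b p > pu b q))"
proof
  assume h: "seg_set p \<inter> seg_set q = {}"
  define d1 where "d1 = pu a p - pu a q"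
  define d2 where "d2 = pu b p - pu b q"
  show "((pu a p < pu a q \<and> pu b p < pu b q) \<or> (pu a p > pu a q \<and> pu b p > pu b q))"
  proof (rule ccontr)
    assume nc: "\<not> ?thesis"
    then have "\<not>((d1 < 0 \<and> d2 < 0) \<or> (d1 > 0 \<and> d2 > 0))" unfolding d1_def d2_def by auto
    then have m: "(0 \<le> d1 \<and> d2 \<le> 0) \<or> (d1 \<le> 0 \<and> 0 \<le> d2)" by auto
    obtain t where t: "0 \<le> t" "t \<le> 1" "(1-t) * d1 + t * d2 = 0"
    proof (cases "d1 = d2")
      case True
      then have "d1 = 0" using m by auto
      then show ?thesis using that[of 0] True by simp
    next
      case False
      define t where "t = d1 / (d1 - d2)"
      have "0 \<le> t" unfolding t_def using m False by (auto simp: zero_le_divide_iff)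
      moreover have "t \<le> 1" unfolding t_def using m False by (auto simp: divide_le_eq_1)
      ultimately have "0 \<le> t \<and> t \<le> 1" by simp
      moreover have "(1-t) * d1 + t * d2 = 0" unfolding t_def using False
        by (simp add: field_simps)
      ultimately show ?thesis using that by blast
    qed
    let ?z = "((1-t) * pu a p + t * pu b p, (1-t) * a + t * b)"
    have "?z \<in> seg_set p" using perm_mem[OF assms(1,2)] t by auto
    moreover have "?z \<in> seg_set q" unfolding perm_mem[OF assms(1,3)] using t
      by (intro exI[of _ t]) (auto simp: d1_def d2_def algebra_simps)
    ultimately show False using h by auto
  qed
next
  assume h: "((pu a p < pu a q \<and> pu b p < pu b q) \<or> (pu a p > pu a q \<and> pu b p > pu b q))"
  show "seg_set p \<inter> seg_set q = {}"
  proof (rule ccontr)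
    assume "seg_set p \<inter> seg_set q \<noteq> {}"
    then obtain z where z: "z \<in> seg_set p" "z \<in> seg_set q" by auto
    from z(1) perm_mem[OF assms(1,2)] obtain t where t: "0 \<le> t" "t \<le> 1"
      "fst z = (1-t) * pu a p + t * pu b p" "snd z = (1-t) * a + t * b" by auto
    from z(2) perm_mem[OF assms(1,3)] obtain t' where t': "0 \<le> t'" "t' \<le> 1"
      "fst z = (1-t') * pu a q + t'*pu b q" "snd z = (1-t') * a + t'*b" by auto
    have "(t - t') * (b - a) = 0" using t(4) t'(4) by (auto simp: algebra_simps)
    then have "t = t'" using assms(1) by simp
    then have e: "(1-t) * (pu a p - pu a q) + t * (pu b p - pu b q) = 0" using t(3) t'(3)
      by (simp add: algebra_simps)
    show False
    proof (cases "t = 0")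
      case True then show ?thesis using e h by auto
    next
      case False
      then have tp: "t > 0" using t by simp
      from h show ?thesis
      proof
        assume "pu a p < pu a q \<and> pu b p < pu b q"
        moreover have "(1-t) * (pu a p - pu a q) \<le> 0" using t calculation
          by (simp add: mult_nonneg_nonpos)
        moreover have "t * (pu b p - pu b q) < 0" using tp calculation
          by (simp add: mult_pos_neg)
        ultimately show False using e by linarith
      next
        assume "pu a p > pu a q \<and> pu b p > pu b q"
        moreover have "(1-t) * (pu a p - pu a q) \<ge> 0" using t calculation
          by simp
        moreover have "t * (pu b p - pu b q) > 0" using tp calculation
          by simp
        ultimately show False using e by linarith
      qed
    qed
  qed
qed



definition sideL :: "real \<Rightarrow> real \<Rightarrow> seg \<Rightarrow> seg \<Rightarrow> bool" where
  "sideL a b p w \<longleftrightarrow> (perm_seg a b w \<and> pu a w < pu a p) \<or>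
     (interval_seg_on a w \<and> (\<forall>x\<in>xs w. x < pu a p)) \<or>
     (interval_seg_on b w \<and> (\<forall>x\<in>xs w. x < pu b p))"

definition sideR :: "real \<Rightarrow> real \<Rightarrow> seg \<Rightarrow> seg \<Rightarrow> bool" where
  "sideR a b p w \<longleftrightarrow> (perm_seg a b w \<and> pu a w > pu a p) \<or>
     (interval_seg_on a w \<and> (\<forall>x\<in>xs w. x > pu a p)) \<or>
     (interval_seg_on b w \<and> (\<forall>x\<in>xs w. x > pu b p))"

lemma excl1: "a \<noteq> b \<Longrightarrow> perm_seg a b w \<Longrightarrow> \<not> interval_seg_on a w \<and> \<not> interval_seg_on b w"
  unfolding perm_seg_def interval_seg_on_def on_line_def by auto

lemma excl2: "a \<noteq> b \<Longrightarrow> interval_seg_on a w \<Longrightarrow> \<not> interval_seg_on b w"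
  unfolding interval_seg_on_def on_line_def by auto

lemma notin_ivl:
  fixes u :: real
  assumes "u \<notin> xs w"
  shows "(\<forall>x\<in>xs w. x < u) \<or> (\<forall>x\<in>xs w. x > u)"
  using assms unfolding xs_def closed_segment_eq_real_ivl
  by (auto split: if_splits)

lemma side_cover:
  assumes "a \<noteq> b" "perm_seg a b p" "interval_seg a b w \<or> perm_seg a b w"
    "seg_set p \<inter> seg_set w = {}"
  shows "sideL a b p w \<or> sideR a b p w"
  using assms(3) unfolding interval_seg_def
proof (elim disjE)
  assume h: "interval_seg_on a w"
  then have "pu a p \<notin> xs w" using perm_int_a[OF assms(1,2) h] assms(4) by auto
  then show ?thesis using notin_ivl h unfolding sideL_def sideR_def by blast
next
  assume h: "interval_seg_on b w"
  then have "pu b p \<notin> xs w" using perm_int_b[OF assms(1,2) h] assms(4) by auto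
  then show ?thesis using notin_ivl h unfolding sideL_def sideR_def by blast
next
  assume h: "perm_seg a b w"
  then show ?thesis using perm_perm[OF assms(1,2) h] assms(4) unfolding sideL_def sideR_def by auto
qed

lemma side_excl:
  assumes ab: "a \<noteq> b"
  shows "\<not> (sideL a b p w \<and> sideR a b p w)"
proof
  assume h: "sideL a b p w \<and> sideR a b p w"
  obtain x where x: "x \<in> xs w" using xs_ne by blast
  have i1: "\<not> (perm_seg a b w \<and> interval_seg_on a w)" "\<not> (perm_seg a b w \<and> interval_seg_on b w)"
    "\<not> (interval_seg_on a w \<and> interval_seg_on b w)" using excl1[OF ab] excl2[OF ab] by blast+
  from h have L: "sideL a b p w" and R: "sideR a b p w" by auto
  show False
  proof (cases "perm_seg a b w")
    case True
    then show False using L R i1 unfolding sideL_def sideR_def by auto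
  next
    case F: False
    show False
    proof (cases "interval_seg_on a w")
      case True
      then have "x < pu a p" "x > pu a p" using L R i1 F x unfolding sideL_def sideR_def by blast+
      then show False by simp
    next
      case False
      then have "x < pu b p" "x > pu b p" using L R i1 F x unfolding sideL_def sideR_def by blast+
      then show False by simp
    qed
  qed
qed

lemma perm_side_b:
  assumes "a \<noteq> b" "perm_seg a b p" "perm_seg a b w" "seg_set p \<inter> seg_set w = {}"
  shows "(pu a w < pu a p \<longrightarrow> pu b w < pu b p) \<and> (pu a w > pu a p \<longrightarrow> pu b w > pu b p)"
proof -
  have "(pu a p < pu a w \<and> pu b p < pu b w) \<or> (pu a p > pu a w \<and> pu b p > pu b w)"
    using perm_perm[OF assms(1,2,3)] assms(4) by blast
  then show ?thesis by auto
qed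

lemma side_pair:
  assumes ab: "a \<noteq> b" and p: "perm_seg a b p"
    and k1: "interval_seg a b w1 \<or> perm_seg a b w1"
    and k2: "interval_seg a b w2 \<or> perm_seg a b w2"
    and d1: "seg_set p \<inter> seg_set w1 = {}" and d2: "seg_set p \<inter> seg_set w2 = {}"
    and m: "seg_set w1 \<inter> seg_set w2 \<noteq> {}"
    and L: "sideL a b p w1" and R: "sideR a b p w2"
  shows False
  using k1 unfolding interval_seg_def
proof (elim disjE)
  assume h1: "interval_seg_on a w1"
  then have L1: "\<forall>x\<in>xs w1. x < pu a p" using L excl2[OF ab] excl1[OF ab] unfolding sideL_def by blast
  from k2 show False unfolding interval_seg_def
  proof (elim disjE)
    assume h2: "interval_seg_on a w2"
    then have R2: "\<forall>x\<in>xs w2. x > pu a p" using R excl2[OF ab] excl1[OF ab] unfolding sideR_def by blast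
    from m ints_meet[OF h1 h2] obtain x where "x \<in> xs w1" "x \<in> xs w2" by auto
    then show False using L1 R2 by force
  next
    assume h2: "interval_seg_on b w2"
    then show False using ints_disj[OF h1 h2 ab] m by simp
  next
    assume h2: "perm_seg a b w2"
    then have "pu a w2 > pu a p" using R excl1[OF ab] unfolding sideR_def by blast
    moreover have "pu a w2 \<in> xs w1" using perm_int_a[OF ab h2 h1] m by blast
    ultimately show False using L1 by force
  qed
next
  assume h1: "interval_seg_on b w1"
  then have L1: "\<forall>x\<in>xs w1. x < pu b p" using L excl2[of b a] ab excl1[OF ab] unfolding sideL_def by blast
  from k2 show False unfolding interval_seg_def
  proof (elim disjE)
    assume h2: "interval_seg_on a w2"
    then show False using ints_disj[OF h2 h1 ab] m by blast
  next
    assume h2: "interval_seg_on b w2"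
    then have R2: "\<forall>x\<in>xs w2. x > pu b p" using R excl2[of b a] ab excl1[OF ab] unfolding sideR_def by blast
    from m ints_meet[OF h1 h2] obtain x where "x \<in> xs w1" "x \<in> xs w2" by auto
    then show False using L1 R2 by force
  next
    assume h2: "perm_seg a b w2"
    then have "pu a w2 > pu a p" using R excl1[OF ab] unfolding sideR_def by blast
    then have "pu b w2 > pu b p" using perm_side_b[OF ab p h2 d2] by blast
    moreover have "pu b w2 \<in> xs w1" using perm_int_b[OF ab h2 h1] m by blast
    ultimately show False using L1 by force
  qed
next
  assume h1: "perm_seg a b w1"
  then have l1: "pu a w1 < pu a p" using L excl1[OF ab] unfolding sideL_def by blast
  then have l1b: "pu b w1 < pu b p" using perm_side_b[OF ab p h1 d1] by blast
  from k2 show False unfolding interval_seg_def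
  proof (elim disjE)
    assume h2: "interval_seg_on a w2"
    then have R2: "\<forall>x\<in>xs w2. x > pu a p" using R excl2[OF ab] excl1[OF ab] unfolding sideR_def by blast
    have "pu a w1 \<in> xs w2" using perm_int_a[OF ab h1 h2] m by blast
    then show False using R2 l1 by force
  next
    assume h2: "interval_seg_on b w2"
    then have R2: "\<forall>x\<in>xs w2. x > pu b p" using R excl2[of b a] ab excl1[OF ab] unfolding sideR_def by blast
    have "pu b w1 \<in> xs w2" using perm_int_b[OF ab h1 h2] m by blast
    then show False using R2 l1b by force
  next
    assume h2: "perm_seg a b w2"
    then have "pu a w2 > pu a p" using R excl1[OF ab] unfolding sideR_def by blast
    then have "pu b w2 > pu b p" using perm_side_b[OF ab p h2 d2] by blast
    then have "seg_set w1 \<inter> seg_set w2 = {}" using perm_perm[OF ab h1 h2] l1 l1b \<open>pu a w2 > pu a p\<close> by auto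
    then show False using m by simp
  qed
qed

lemma side_step:
  assumes ab: "a \<noteq> b" and p: "perm_seg a b p"
    and k1: "interval_seg a b w1 \<or> perm_seg a b w1"
    and k2: "interval_seg a b w2 \<or> perm_seg a b w2"
    and d1: "seg_set p \<inter> seg_set w1 = {}" and d2: "seg_set p \<inter> seg_set w2 = {}"
    and m: "seg_set w1 \<inter> seg_set w2 \<noteq> {}"
  shows "(sideL a b p w1 = sideL a b p w2) \<and> (sideR a b p w1 = sideR a b p w2)"
proof -
  have m': "seg_set w2 \<inter> seg_set w1 \<noteq> {}" using m by blast
  note c1 = side_cover[OF ab p k1 d1] and c2 = side_cover[OF ab p k2 d2]
  note e1 = side_excl[OF ab, of p w1] and e2 = side_excl[OF ab, of p w2]
  note s1 = side_pair[OF ab p k1 k2 d1 d2 m] and s2 = side_pair[OF ab p k2 k1 d2 d1 m']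
  show ?thesis using c1 c2 e1 e2 s1 s2 by blast
qed

lemma side_chain:
  assumes ab: "a \<noteq> b" and p: "perm_seg a b p"
    and k: "\<And>t. t1 \<le> t \<Longrightarrow> t \<le> t1 + d \<Longrightarrow> interval_seg a b (T t) \<or> perm_seg a b (T t)"
    and dj: "\<And>t. t1 \<le> t \<Longrightarrow> t \<le> t1 + d \<Longrightarrow> seg_set p \<inter> seg_set (T t) = {}"
    and m: "\<And>t. t1 \<le> t \<Longrightarrow> t < t1 + d \<Longrightarrow> seg_set (T t) \<inter> seg_set (T (Suc t)) \<noteq> {}"
  shows "(sideL a b p (T t1) = sideL a b p (T (t1 + d))) \<and> (sideR a b p (T t1) = sideR a b p (T (t1 + d)))"
  using k dj m
proof (induction d)
  case 0
  then show ?case by simp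
next
  case (Suc d)
  have IH: "(sideL a b p (T t1) = sideL a b p (T (t1 + d))) \<and> (sideR a b p (T t1) = sideR a b p (T (t1 + d)))"
    using Suc.IH Suc.prems by simp
  have "(sideL a b p (T (t1+d)) = sideL a b p (T (Suc (t1 + d)))) \<and> (sideR a b p (T (t1+d)) = sideR a b p (T (Suc (t1 + d))))"
    by (rule side_step[OF ab p]) (use Suc.prems in auto)
  then show ?case using IH by simp
qed

lemma cover_chain:
  fixes z :: real
  assumes ov: "\<And>u. u < k \<Longrightarrow> xs (T u) \<inter> xs (T (Suc u)) \<noteq> {}"
    and w0: "w0 \<in> xs (T 0)" and wk: "wk \<in> xs (T k)"
    and z: "min w0 wk \<le> z" "z \<le> max w0 wk"
  shows "\<exists>u\<le>k. z \<in> xs (T u)"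
  using ov wk z
proof (induction k arbitrary: wk)
  case 0
  have "z \<in> closed_segment w0 wk" using 0 unfolding closed_segment_eq_real_ivl by auto
  moreover have "closed_segment w0 wk \<subseteq> xs (T 0)"
    using closed_segment_subset[OF w0 0(2)] convex_closed_segment unfolding xs_def by simp
  ultimately show ?case by auto
next
  case (Suc k)
  obtain w' where w': "w' \<in> xs (T k)" "w' \<in> xs (T (Suc k))" using Suc.prems(1)[of k] by auto
  show ?case
  proof (cases "min w0 w' \<le> z \<and> z \<le> max w0 w'")
    case True
    then show ?thesis using Suc.IH[of w'] Suc.prems w' by force
  next
    case False
    then have "z \<in> closed_segment w' wk" using Suc.prems unfolding closed_segment_eq_real_ivl by auto
    moreover have "closed_segment w' wk \<subseteq> xs (T (Suc k))"
      using closed_segment_subset[OF w'(2) Suc.prems(2)] convex_closed_segment unfolding xs_def by simp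
    ultimately show ?thesis by auto
  qed
qed



lemma sucmod: "i < n \<Longrightarrow> Suc i mod n = (if Suc i = n then 0 else Suc i)"
  by auto

lemma ip_kind: "IPSEG_rep_cycle a b n T \<Longrightarrow> t < n \<Longrightarrow> interval_seg a b (T t) \<or> perm_seg a b (T t)"
  unfolding IPSEG_rep_cycle_def by blast

lemma ip_meet: "IPSEG_rep_cycle a b n T \<Longrightarrow> i < n \<Longrightarrow> j < n \<Longrightarrow> i \<noteq> j \<Longrightarrow>
   (seg_set (T i) \<inter> seg_set (T j) \<noteq> {}) = (j = Suc i mod n \<or> i = Suc j mod n)"
  unfolding IPSEG_rep_cycle_def by blast

lemma core:
  assumes ab: "a \<noteq> b" and n4: "4 \<le> n" and R: "IPSEG_rep_cycle a b n T"
    and A: "\<forall>t\<le>k. interval_seg_on a (T t)"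
    and pp: "perm_seg a b (T (Suc k))" and pq: "perm_seg a b (T (n-1))"
    and J1: "Suc (Suc k) \<le> tJ" and J2: "tJ \<le> n - 2" and J: "interval_seg_on a (T tJ)"
  shows False
proof -
  define m where "m t1 t2 \<longleftrightarrow> seg_set (T t1) \<inter> seg_set (T t2) \<noteq> {}" for t1 t2
  have M: "m i j = (j = Suc i mod n \<or> i = Suc j mod n)" if "i < n" "j < n" "i \<noteq> j" for i j
    using ip_meet[OF R that] unfolding m_def by simp
  have msym: "m i j = m j i" for i j unfolding m_def by blast
  have cons: "m t (Suc t)" if "Suc t < n" for t
    using M[of t "Suc t"] that by simp
  have last: "m (n-1) 0" using M[of "n-1" 0] n4 by simp
  have kT: "interval_seg a b (T t) \<or> perm_seg a b (T t)" if "t < n" for t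
    using ip_kind[OF R that] .
  have kn: "Suc (Suc (Suc k)) \<le> n" using J1 J2 n4 by linarith
  have Ak: "interval_seg_on a (T k)" using A by simp
  have A0: "interval_seg_on a (T 0)" using A by simp
  have "m (Suc k) k" using cons[of k] kn msym[of "Suc k" k] by simp
  then have "seg_set (T (Suc k)) \<inter> seg_set (T k) \<noteq> {}" unfolding m_def .
  then have xp_k: "pu a (T (Suc k)) \<in> xs (T k)"
    using perm_int_a[OF ab pp Ak] by simp
  have "seg_set (T (n-1)) \<inter> seg_set (T 0) \<noteq> {}" using last unfolding m_def .
  then have xq_0: "pu a (T (n-1)) \<in> xs (T 0)"
    using perm_int_a[OF ab pq A0] by simp
  show False
  proof (cases "tJ = Suc (Suc k)")
    case True
    have "m (Suc k) tJ" using cons[of "Suc k"] True kn by simp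
    then have "pu a (T (Suc k)) \<in> xs (T tJ)" using perm_int_a[OF ab pp J] unfolding m_def by blast
    then have "m k tJ" using ints_meet[OF Ak J] xp_k unfolding m_def by blast
    moreover have "\<not> m k tJ" using M[of k tJ] True kn J2 by (simp add: sucmod)
    ultimately show False by simp
  next
    case F1: False
    show False
    proof (cases "tJ = n - 2")
      case True
      have "m (n-1) tJ" using cons[of "n-2"] True n4 msym by (simp add: Suc_diff_Suc numeral_2_eq_2)
      then have "pu a (T (n-1)) \<in> xs (T tJ)" using perm_int_a[OF ab pq J] unfolding m_def by blast
      then have "m 0 tJ" using ints_meet[OF A0 J] xq_0 unfolding m_def by blast
      moreover have "\<not> m 0 tJ" using M[of 0 tJ] True n4 by (simp add: sucmod)
      ultimately show False by simp
    next
      case F2: False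
      have J1': "Suc (Suc (Suc k)) \<le> tJ" and J2': "tJ + 3 \<le> n" using F1 F2 J1 J2 n4 by auto
      let ?p = "T (Suc k)" and ?q = "T (n-1)"
      have "\<not> m (Suc k) (n-1)" using M[of "Suc k" "n-1"] J1' J2' by (simp add: sucmod)
      then have dpq: "seg_set ?p \<inter> seg_set ?q = {}" unfolding m_def by simp
      have ch1: "(sideL a b ?p (T tJ) = sideL a b ?p (T (tJ + (n - 1 - tJ)))) \<and>
                 (sideR a b ?p (T tJ) = sideR a b ?p (T (tJ + (n - 1 - tJ))))"
      proof (rule side_chain[OF ab pp])
        fix t assume "tJ \<le> t" "t \<le> tJ + (n - 1 - tJ)"
        then show "interval_seg a b (T t) \<or> perm_seg a b (T t)" using kT J2' by auto
      next
        fix t assume h: "tJ \<le> t" "t \<le> tJ + (n - 1 - tJ)"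
        then have "\<not> m (Suc k) t" using M[of "Suc k" t] J1' J2' by (simp add: sucmod)
        then show "seg_set ?p \<inter> seg_set (T t) = {}" unfolding m_def by simp
      next
        fix t assume h: "tJ \<le> t" "t < tJ + (n - 1 - tJ)"
        then show "seg_set (T t) \<inter> seg_set (T (Suc t)) \<noteq> {}" using cons[of t] unfolding m_def by simp
      qed
      have e1: "tJ + (n - 1 - tJ) = n - 1" using J2' by simp
      have ch2: "(sideL a b ?q (T (Suc k)) = sideL a b ?q (T (Suc k + (tJ - Suc k)))) \<and>
                 (sideR a b ?q (T (Suc k)) = sideR a b ?q (T (Suc k + (tJ - Suc k))))"
      proof (rule side_chain[OF ab pq])
        fix t assume "Suc k \<le> t" "t \<le> Suc k + (tJ - Suc k)"
        then show "interval_seg a b (T t) \<or> perm_seg a b (T t)" using kT J2' J1' by auto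
      next
        fix t assume h: "Suc k \<le> t" "t \<le> Suc k + (tJ - Suc k)"
        then have "\<not> m (n-1) t" using M[of "n-1" t] J1' J2' by (simp add: sucmod)
        then show "seg_set ?q \<inter> seg_set (T t) = {}" unfolding m_def by simp
      next
        fix t assume h: "Suc k \<le> t" "t < Suc k + (tJ - Suc k)"
        then show "seg_set (T t) \<inter> seg_set (T (Suc t)) \<noteq> {}" using cons[of t] J2' unfolding m_def by simp
      qed
      have e2: "Suc k + (tJ - Suc k) = tJ" using J1' by simp
      have nJ1: "\<not> interval_seg_on b (T tJ)" "\<not> perm_seg a b (T tJ)"
        using J excl2[OF ab] excl1[OF ab] by blast+
      obtain z where z: "z \<in> xs (T tJ)" using xs_ne by blast
      have zb: "min (pu a ?q) (pu a ?p) \<le> z \<and> z \<le> max (pu a ?q) (pu a ?p)"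
      proof (cases "pu a ?q < pu a ?p")
        case True
        have "sideL a b ?p ?q" using True pq unfolding sideL_def by blast
        then have "sideL a b ?p (T tJ)" using ch1 e1 by simp
        then have z1: "z < pu a ?p" using nJ1 z unfolding sideL_def by blast
        have "sideR a b ?q ?p" using True pp unfolding sideR_def by blast
        then have "sideR a b ?q (T tJ)" using ch2 e2 by simp
        then have z2: "z > pu a ?q" using nJ1 z unfolding sideR_def by blast
        show ?thesis using z1 z2 by linarith
      next
        case False
        then have Fa: "pu a ?q > pu a ?p" using perm_perm[OF ab pp pq] dpq by auto
        have "sideR a b ?p ?q" using Fa pq unfolding sideR_def by blast
        then have "sideR a b ?p (T tJ)" using ch1 e1 by simp
        then have z1: "z > pu a ?p" using nJ1 z unfolding sideR_def by blast
        have "sideL a b ?q ?p" using Fa pp unfolding sideL_def by blast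
        then have "sideL a b ?q (T tJ)" using ch2 e2 by simp
        then have z2: "z < pu a ?q" using nJ1 z unfolding sideL_def by blast
        show ?thesis using z1 z2 by linarith
      qed
      have "\<exists>u\<le>k. z \<in> xs (T u)"
      proof (rule cover_chain[OF _ xq_0 xp_k])
        fix u assume "u < k"
        then have "m u (Suc u)" using cons[of u] kn by simp
        then show "xs (T u) \<inter> xs (T (Suc u)) \<noteq> {}"
          using ints_meet[of a "T u" "T (Suc u)"] A \<open>u < k\<close> unfolding m_def by simp
      qed (use zb in auto)
      then obtain u where u: "u \<le> k" "z \<in> xs (T u)" by blast
      have "m u tJ" using ints_meet[of a "T u" "T tJ"] A u J z unfolding m_def by blast
      moreover have "\<not> m u tJ" using M[of u tJ] u J1' J2' by (simp add: sucmod)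
      ultimately show False by simp
    qed
  qed
qed



lemma modc: "((c + x) mod n = (c + y) mod (n::nat)) \<longleftrightarrow> (x mod n = y mod n)"
  by (simp add: nat_mod_eq_iff add.assoc)

lemma rotate:
  assumes R: "IPSEG_rep_cycle a b n s" and c: "c < n"
  shows "IPSEG_rep_cycle a b n (\<lambda>t. s ((c + t) mod n))"
  unfolding IPSEG_rep_cycle_def
proof (intro conjI allI impI)
  fix i assume "i < n"
  then show "interval_seg a b (s ((c + i) mod n)) \<or> perm_seg a b (s ((c + i) mod n))"
    using ip_kind[OF R, of "(c+i) mod n"] c by simp
next
  fix i j assume ij: "i < n" "j < n" "i \<noteq> j"
  have key: "((c+j) mod n = Suc ((c+i) mod n) mod n) \<longleftrightarrow> (j = Suc i mod n)" if "i < n" "j < n" for i j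
  proof -
    have e: "Suc ((c+i) mod n) mod n = (c + Suc i) mod n" by (simp add: mod_Suc_eq)
    have "((c+j) mod n = (c + Suc i) mod n) \<longleftrightarrow> (j mod n = Suc i mod n)" by (rule modc)
    then have "((c+j) mod n = Suc ((c+i) mod n) mod n) \<longleftrightarrow> (j mod n = Suc i mod n)" using e by simp
    then show ?thesis using that by simp
  qed
  have ne: "(c+i) mod n \<noteq> (c+j) mod n" using modc[of c i n j] ij by simp
  show "(seg_set (s ((c + i) mod n)) \<inter> seg_set (s ((c + j) mod n)) \<noteq> {}) =
       (j = Suc i mod n \<or> i = Suc j mod n)"
  proof -
    have I: "(c+i) mod n < n" "(c+j) mod n < n" using c by simp_all
    have m: "(seg_set (s ((c + i) mod n)) \<inter> seg_set (s ((c + j) mod n)) \<noteq> {}) =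
       ((c+j) mod n = Suc ((c+i) mod n) mod n \<or> (c+i) mod n = Suc ((c+j) mod n) mod n)"
      by (rule ip_meet[OF R I ne])
    show ?thesis using m key[OF ij(1,2)] key[OF ij(2,1)] by blast
  qed
qed

lemma interval_seg_symf: "interval_seg b a = interval_seg a b"
  by (rule ext) (simp add: interval_seg_def disj_commute)

lemma perm_symf: "perm_seg b a = perm_seg a b"
  by (rule ext) (simp add: perm_seg_def disj_commute)

lemma IPSEG_sym: "IPSEG_rep_cycle b a n s = IPSEG_rep_cycle a b n s"
  by (simp only: IPSEG_rep_cycle_def interval_seg_symf[of a b] perm_symf[of a b])

lemma arc_sym: "interval_arc b a n s A = interval_arc a b n s A"
  by (simp only: interval_arc_def interval_run_def interval_seg_symf[of a b])

lemma cyc_mem: "x \<in> cyc_block n i k \<longleftrightarrow> (\<exists>t\<le>k. x = (i + t) mod n)"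
  unfolding cyc_block_def by auto

lemma cyc_lt: "x \<in> cyc_block n i k \<Longrightarrow> 0 < n \<Longrightarrow> x < n"
  unfolding cyc_mem by auto

lemma pos_of:
  assumes "i < n" "J < (n::nat)"
  shows "\<exists>t<n. J = (i + t) mod n"
proof -
  have "(i + (J + n - i) mod n) mod n = (i + (J + n - i)) mod n" by (simp add: mod_add_right_eq)
  also have "\<dots> = (J + n) mod n" using assms by simp
  also have "\<dots> = J" using assms by simp
  finally show ?thesis using assms by (intro exI[of _ "(J + n - i) mod n"]) auto
qed

lemma mono_T:
  assumes ab: "a \<noteq> b" and R: "IPSEG_rep_cycle a b n T" and kn: "k < n"
    and I: "\<forall>t\<le>k. interval_seg a b (T t)" and c0: "interval_seg_on c (T 0)" and c: "c = a \<or> c = b"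
  shows "\<forall>t\<le>k. interval_seg_on c (T t)"
proof (intro allI impI)
  fix t assume "t \<le> k"
  then show "interval_seg_on c (T t)"
  proof (induction t)
    case 0 then show ?case using c0 by simp
  next
    case (Suc t)
    have ih: "interval_seg_on c (T t)" using Suc by simp
    have m: "seg_set (T t) \<inter> seg_set (T (Suc t)) \<noteq> {}"
      using ip_meet[OF R, of t "Suc t"] Suc.prems kn by simp
    have "interval_seg_on a (T (Suc t)) \<or> interval_seg_on b (T (Suc t))"
      using I Suc.prems unfolding interval_seg_def by blast
    then show ?case
    proof
      assume h: "interval_seg_on a (T (Suc t))"
      show ?thesis
      proof (cases "c = a")
        case True then show ?thesis using h by simp
      next
        case False then have "c = b" using c by simp
        then show ?thesis using ints_disj[of a "T (Suc t)" b "T t"] h ih ab m by blast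
      qed
    next
      assume h: "interval_seg_on b (T (Suc t))"
      show ?thesis
      proof (cases "c = b")
        case True then show ?thesis using h by simp
      next
        case False then have "c = a" using c by simp
        then show ?thesis using ints_disj[of a "T t" b "T (Suc t)"] h ih ab m by blast
      qed
    qed
  qed
qed

lemma arc_mono:
  assumes ab: "a \<noteq> b" and R: "IPSEG_rep_cycle a b n s" and A: "interval_run a b n s A"
  shows "(\<forall>j\<in>A. interval_seg_on a (s j)) \<or> (\<forall>j\<in>A. interval_seg_on b (s j))"
proof -
  obtain i k where ik: "i < n" "k < n" "A = cyc_block n i k" and I: "\<forall>j\<in>A. interval_seg a b (s j)"
    using A unfolding interval_run_def by blast
  let ?T = "\<lambda>t. s ((i + t) mod n)"
  have RT: "IPSEG_rep_cycle a b n ?T" using rotate[OF R ik(1)] .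
  have IT: "\<forall>t\<le>k. interval_seg a b (?T t)" using I ik(3) cyc_mem by blast
  have "interval_seg_on a (?T 0) \<or> interval_seg_on b (?T 0)" using IT unfolding interval_seg_def by auto
  then obtain c where c: "c = a \<or> c = b" "interval_seg_on c (?T 0)" by blast
  have "\<forall>t\<le>k. interval_seg_on c (?T t)" using mono_T[OF ab RT ik(2) IT c(2) c(1)] .
  then have "\<forall>j\<in>A. interval_seg_on c (s j)" using ik(3) cyc_mem by auto
  then show ?thesis using c(1) by blast
qed

lemma arc_ne: "interval_run a b n s A \<Longrightarrow> A \<noteq> {}"
  unfolding interval_run_def cyc_block_def by auto

lemma uniq:
  assumes ab: "a \<noteq> b" and n4: "4 \<le> n" and R: "IPSEG_rep_cycle a b n s"
    and arcA: "interval_arc a b n s A" and arcB: "interval_arc a b n s B"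
    and Aa: "\<forall>j\<in>A. interval_seg_on a (s j)" and Ba: "\<forall>j\<in>B. interval_seg_on a (s j)"
  shows "A = B"
proof (rule ccontr)
  assume AB: "A \<noteq> B"
  obtain i k where ik: "i < n" "k < n" "A = cyc_block n i k" and IA: "\<forall>j\<in>A. interval_seg a b (s j)"
    using arcA unfolding interval_arc_def interval_run_def by blast
  have runA: "interval_run a b n s A" using arcA unfolding interval_arc_def by blast
  have maxA: "\<And>X. interval_run a b n s X \<Longrightarrow> A \<subseteq> X \<Longrightarrow> X = A"
    using arcA unfolding interval_arc_def by blast
  have "\<not> B \<subseteq> A" using arcB runA AB unfolding interval_arc_def by blast
  then obtain J where J: "J \<in> B" "J \<notin> A" by blast
  have Jn: "J < n" using J(1) arcB n4 unfolding interval_arc_def interval_run_def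
    by (auto dest: cyc_lt)
  have JI: "interval_seg_on a (s J)" using Ba J by blast
  let ?T = "\<lambda>t. s ((i + t) mod n)"
  have RT: "IPSEG_rep_cycle a b n ?T" using rotate[OF R ik(1)] .
  obtain tJ where tJ: "tJ < n" "J = (i + tJ) mod n" using pos_of[OF ik(1) Jn] by blast
  have memA: "(i + t) mod n \<in> A \<longleftrightarrow> t \<le> k" if "t < n" for t
  proof
    assume "(i + t) mod n \<in> A"
    then obtain t' where "t' \<le> k" "(i+t) mod n = (i + t') mod n" using ik(3) cyc_mem by blast
    then have "t mod n = t' mod n" using modc[of i t n t'] by simp
    then show "t \<le> k" using that \<open>t' \<le> k\<close> ik(2) by simp
  qed (use ik(3) cyc_mem in blast)
  have tJk: "k < tJ" using memA[OF tJ(1)] tJ J(2) by auto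
  have kn: "Suc k < n" using tJk tJ(1) by simp
  have notI1: "\<not> interval_seg a b (?T (Suc k))"
  proof
    assume h: "interval_seg a b (?T (Suc k))"
    have "interval_run a b n s (cyc_block n i (Suc k))"
      unfolding interval_run_def
    proof (intro conjI)
      show "\<exists>i' k'. i' < n \<and> k' < n \<and> cyc_block n i (Suc k) = cyc_block n i' k'" using ik kn by blast
      show "\<forall>j\<in>cyc_block n i (Suc k). interval_seg a b (s j)"
      proof
        fix j assume "j \<in> cyc_block n i (Suc k)"
        then obtain t where t: "t \<le> Suc k" "j = (i + t) mod n" using cyc_mem by blast
        show "interval_seg a b (s j)"
        proof (cases "t = Suc k")
          case True then show ?thesis using h t by simp
        next
          case False then have "t \<le> k" using t by simp
          then have "(i+t) mod n \<in> A" using ik(3) cyc_mem by blast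
          then show ?thesis using IA t by simp
        qed
      qed
    qed
    moreover have "A \<subseteq> cyc_block n i (Suc k)" using ik(3) unfolding cyc_block_def by fastforce
    ultimately have "cyc_block n i (Suc k) = A" using maxA by blast
    moreover have "(i + Suc k) mod n \<in> cyc_block n i (Suc k)" using cyc_mem by blast
    ultimately show False using memA[OF kn] by simp
  qed
  have n1: "n - 1 < n" using n4 by simp
  have notI2: "\<not> interval_seg a b (?T (n - 1))"
  proof
    assume h: "interval_seg a b (?T (n - 1))"
    let ?i' = "(i + (n - 1)) mod n"
    have shift: "(?i' + t) mod n = (i + (n - 1) + t) mod n" for t by (simp add: mod_add_left_eq)
    have shift2: "(i + (n - 1) + Suc t) mod n = (i + t) mod n" for t
    proof -
      have eq: "i + (n - 1) + Suc t = (i + t) + n" using n4 by simp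
      have "(i + (n - 1) + Suc t) mod n = ((i + t) + n) mod n" by (simp only: eq)
      also have "\<dots> = (i + t) mod n" by (rule mod_add_self2)
      finally show ?thesis .
    qed
    have "interval_run a b n s (cyc_block n ?i' (Suc k))"
      unfolding interval_run_def
    proof (intro conjI)
      show "\<exists>i'' k'. i'' < n \<and> k' < n \<and> cyc_block n ?i' (Suc k) = cyc_block n i'' k'"
        by (intro exI[of _ ?i'] exI[of _ "Suc k"]) (use ik kn n4 in auto)
      show "\<forall>j\<in>cyc_block n ?i' (Suc k). interval_seg a b (s j)"
      proof
        fix j assume "j \<in> cyc_block n ?i' (Suc k)"
        then obtain t where t: "t \<le> Suc k" "j = (?i' + t) mod n" using cyc_mem by blast
        show "interval_seg a b (s j)"
        proof (cases t)
          case 0 then show ?thesis using h t by simp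
        next
          case (Suc t')
          have "j = (?i' + Suc t') mod n" using t(2) Suc by simp
          also have "\<dots> = (i + (n - 1) + Suc t') mod n" by (rule shift)
          also have "\<dots> = (i + t') mod n" by (rule shift2)
          finally have "j = (i + t') mod n" .
          moreover have "(i+t') mod n \<in> A" using ik(3) cyc_mem t Suc by auto
          ultimately show ?thesis using IA by simp
        qed
      qed
    qed
    moreover have "A \<subseteq> cyc_block n ?i' (Suc k)"
    proof
      fix j assume "j \<in> A"
      then obtain t where t: "t \<le> k" "j = (i + t) mod n" using ik(3) cyc_mem by blast
      have "(?i' + Suc t) mod n = (i + (n - 1) + Suc t) mod n" by (rule shift)
      also have "\<dots> = (i + t) mod n" by (rule shift2)
      finally have "j = (?i' + Suc t) mod n" using t(2) by simp
      then show "j \<in> cyc_block n ?i' (Suc k)" using cyc_mem t by blast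
    qed
    ultimately have "cyc_block n ?i' (Suc k) = A" using maxA by blast
    moreover have "?i' \<in> cyc_block n ?i' (Suc k)" using cyc_mem[of ?i' n ?i' "Suc k"] by auto
    ultimately have "(i + (n - 1)) mod n \<in> A" by simp
    then have "n - 1 \<le> k" using memA[OF n1] by blast
    then show False using kn by simp
  qed
  have pp: "perm_seg a b (?T (Suc k))" using ip_kind[OF RT kn] notI1 by blast
  have pq: "perm_seg a b (?T (n - 1))" using ip_kind[OF RT n1] notI2 by blast
  have At: "\<forall>t\<le>k. interval_seg_on a (?T t)" using Aa ik(3) cyc_mem by blast
  have JT: "interval_seg_on a (?T tJ)" using JI tJ by simp
  have "tJ \<noteq> Suc k" using JT notI1 unfolding interval_seg_def by blast
  moreover have "tJ \<noteq> n - 1" using JT notI2 unfolding interval_seg_def by blast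
  ultimately have J1: "Suc (Suc k) \<le> tJ" and J2: "tJ \<le> n - 2" using tJk tJ(1) by auto
  show False using core[OF ab n4 RT At pp pq J1 J2 JT] .
qed

lemma exists_arc:
  assumes n4: "4 \<le> n" and i0: "i0 < n" "interval_seg a b (s i0)"
  shows "\<exists>A. interval_arc a b n s A"
proof -
  let ?R = "{X. interval_run a b n s X \<and> i0 \<in> X}"
  have "?R \<subseteq> Pow {..<n}" unfolding interval_run_def using n4 by (auto dest: cyc_lt)
  then have fin: "finite ?R" by (rule finite_subset) simp
  have c0: "cyc_block n i0 0 = {i0}" unfolding cyc_block_def using i0 by auto
  have r0: "interval_run a b n s (cyc_block n i0 0)" unfolding interval_run_def
  proof (intro conjI)
    show "\<exists>i k. i < n \<and> k < n \<and> cyc_block n i0 0 = cyc_block n i k"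
      by (intro exI[of _ i0] exI[of _ 0]) (use i0 n4 in auto)
    show "\<forall>j\<in>cyc_block n i0 0. interval_seg a b (s j)" using c0 i0 by simp
  qed
  have "cyc_block n i0 0 \<in> ?R" using r0 c0 by simp
  then have "?R \<noteq> {}" by blast
  from finite_has_maximal[OF fin this] obtain m where m: "m \<in> ?R" "\<forall>X\<in>?R. m \<le> X \<longrightarrow> m = X" by blast
  have "interval_arc a b n s m" unfolding interval_arc_def
  proof (intro conjI allI impI)
    show "interval_run a b n s m" using m by simp
    fix B assume "interval_run a b n s B \<and> m \<subseteq> B"
    then show "B = m" using m by auto
  qed
  then show ?thesis by blast
qed

theorem mainTheorem6:
  fixes a b :: real and n :: nat and s :: "nat \<Rightarrow> seg"
  assumes "a \<noteq> b"
    and "n \<ge> 4"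
    and "IPSEG_rep_cycle a b n s"
    and "\<exists>i<n. interval_seg a b (s i)"
  shows "card {A. interval_arc a b n s A} = 1 \<or>
         (card {A. interval_arc a b n s A} = 2 \<and>
          (\<exists>A B. interval_arc a b n s A \<and> interval_arc a b n s B \<and>
                 (\<forall>j\<in>A. interval_seg_on a (s j)) \<and> (\<forall>j\<in>B. interval_seg_on b (s j))))"
proof -
  note ab = assms(1) and n4 = assms(2) and R = assms(3)
  have ba: "b \<noteq> a" using ab by simp
  have Rb: "IPSEG_rep_cycle b a n s" using R IPSEG_sym[of a b n s] by simp
  have mono: "(\<forall>j\<in>A. interval_seg_on a (s j)) \<or> (\<forall>j\<in>A. interval_seg_on b (s j))"
    if "interval_arc a b n s A" for A
    using arc_mono[OF ab R] that unfolding interval_arc_def by blast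
  have ne: "A \<noteq> {}" if "interval_arc a b n s A" for A
    using arc_ne that unfolding interval_arc_def by blast
  have ua: "A = B" if "interval_arc a b n s A" "interval_arc a b n s B"
    "\<forall>j\<in>A. interval_seg_on a (s j)" "\<forall>j\<in>B. interval_seg_on a (s j)" for A B
    using uniq[OF ab n4 R that] .
  have ub: "A = B" if "interval_arc a b n s A" "interval_arc a b n s B"
    "\<forall>j\<in>A. interval_seg_on b (s j)" "\<forall>j\<in>B. interval_seg_on b (s j)" for A B
  proof -
    have "interval_arc b a n s A" using that(1) arc_sym[of a b n s A] by simp
    moreover have "interval_arc b a n s B" using that(2) arc_sym[of a b n s B] by simp
    ultimately show ?thesis using uniq[OF ba n4 Rb _ _ that(3) that(4)] by simp
  qed
  obtain A0 where A0: "interval_arc a b n s A0" using exists_arc[OF n4] assms(4) by blast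
  show ?thesis
  proof (cases "(\<exists>A. interval_arc a b n s A \<and> (\<forall>j\<in>A. interval_seg_on a (s j))) \<and>
                (\<exists>B. interval_arc a b n s B \<and> (\<forall>j\<in>B. interval_seg_on b (s j)))")
    case True
    then obtain A B where A: "interval_arc a b n s A" "\<forall>j\<in>A. interval_seg_on a (s j)"
      and B: "interval_arc a b n s B" "\<forall>j\<in>B. interval_seg_on b (s j)" by blast
    have AB: "A \<noteq> B"
    proof
      assume "A = B"
      obtain j where "j \<in> A" using ne[OF A(1)] by blast
      then show False using A(2) B(2) \<open>A = B\<close> excl2[OF ab] by blast
    qed
    have eqs: "{A. interval_arc a b n s A} = {A, B}"
    proof (rule set_eqI, rule iffI)
      fix X assume "X \<in> {A. interval_arc a b n s A}"
      then have X: "interval_arc a b n s X" by simp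
      from mono[OF X] have "X = A \<or> X = B"
      proof
        assume "\<forall>j\<in>X. interval_seg_on a (s j)"
        then show ?thesis using ua[OF X A(1) _ A(2)] by simp
      next
        assume "\<forall>j\<in>X. interval_seg_on b (s j)"
        then show ?thesis using ub[OF X B(1) _ B(2)] by simp
      qed
      then show "X \<in> {A, B}" by simp
    qed (use A B in auto)
    have c2: "card {A. interval_arc a b n s A} = 2" unfolding eqs using AB by simp
    have "\<exists>A B. interval_arc a b n s A \<and> interval_arc a b n s B \<and>
                 (\<forall>j\<in>A. interval_seg_on a (s j)) \<and> (\<forall>j\<in>B. interval_seg_on b (s j))"
      using A B by blast
    then show ?thesis using c2 by blast
  next
    case False
    have "{A. interval_arc a b n s A} = {A0}"
    proof (rule set_eqI, rule iffI)
      fix X assume "X \<in> {A. interval_arc a b n s A}"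
      then have X: "interval_arc a b n s X" by simp
      have "X = A0"
      proof (cases "\<forall>j\<in>X. interval_seg_on a (s j)")
        case Xa: True
        show ?thesis
        proof (cases "\<forall>j\<in>A0. interval_seg_on a (s j)")
          case True then show ?thesis using ua[OF X A0] Xa by simp
        next
          case F2: False
          then have "\<forall>j\<in>A0. interval_seg_on b (s j)" using mono[OF A0] F2 by blast
          then have "(\<exists>A. interval_arc a b n s A \<and> (\<forall>j\<in>A. interval_seg_on a (s j))) \<and>
                (\<exists>B. interval_arc a b n s B \<and> (\<forall>j\<in>B. interval_seg_on b (s j)))"
          proof (intro conjI)
            show "\<exists>A. interval_arc a b n s A \<and> (\<forall>j\<in>A. interval_seg_on a (s j))" using X Xa by blast
            show "\<exists>B. interval_arc a b n s B \<and> (\<forall>j\<in>B. interval_seg_on b (s j))" using A0 \<open>\<forall>j\<in>A0. interval_seg_on b (s j)\<close> by blast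
          qed
          then show ?thesis using False by simp
        qed
      next
        case Xb0: False
        then have Xb: "\<forall>j\<in>X. interval_seg_on b (s j)" using mono[OF X] Xb0 by blast
        show ?thesis
        proof (cases "\<forall>j\<in>A0. interval_seg_on a (s j)")
          case True
          then have "(\<exists>A. interval_arc a b n s A \<and> (\<forall>j\<in>A. interval_seg_on a (s j))) \<and>
                (\<exists>B. interval_arc a b n s B \<and> (\<forall>j\<in>B. interval_seg_on b (s j)))"
          proof (intro conjI)
            show "\<exists>A. interval_arc a b n s A \<and> (\<forall>j\<in>A. interval_seg_on a (s j))" using A0 True by blast
            show "\<exists>B. interval_arc a b n s B \<and> (\<forall>j\<in>B. interval_seg_on b (s j))" using X Xb by blast
          qed
          then show ?thesis using False by simp
        next
          case F2: False
          then have "\<forall>j\<in>A0. interval_seg_on b (s j)" using mono[OF A0] F2 by blast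
          then show ?thesis using ub[OF X A0] Xb by simp
        qed
      qed
      then show "X \<in> {A0}" by simp
    qed (use A0 in auto)
    then show ?thesis by simp
  qed
qed

end
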